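(* Let $n,k$ be integers with $1\le k\le n-2$ and let $c_0,\dots,c_{n-1}$ be real constants. For an ordered bid vector $b_1\ge\dots\ge b_n\ge 0$ define $r_i=c_0+c_1b_1+\dots+c_{i-1}b_{i-1}+c_ib_{i+1}+\dots+c_{n-1}b_n$ for $i=1,\dots,n$. If $r_n\ge 0$ for every ordered bid vector, then the corresponding TFRM is individually rational for users (IR$_u$): under truthful bidding, every included user has nonnegative utility for every ordered bid vector.
   Context: TFRM: the block includes $n$ transactions with bids ordered $b_1\ge\dots\ge b_n$ (truthful, $b_i=\theta_i$ the valuation); users $1,\dots,k$ are confirmed and each pays $b_{k+1}-r_i$; users $j\in\{k+1,\dots,n\}$ are included but unconfirmed and pay $-r_j$. User utility is $u_i=\mathbb{1}[i\text{ confirmed}]\,\theta_i-p_i$. *)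

theory Defs
  imports Complex_Main
begin

text \<open>Bid vectors are functions nat => real, used on indices 1..n.\<close>
definition ordered_bids :: "nat \<Rightarrow> (nat \<Rightarrow> real) \<Rightarrow> bool" where
  "ordered_bids n b \<longleftrightarrow>
     (\<forall>i j. 1 \<le> i \<longrightarrow> i \<le> j \<longrightarrow> j \<le> n \<longrightarrow> b j \<le> b i) \<and> (\<forall>i\<in>{1..n}. 0 \<le> b i)"

definition rfee :: "(nat \<Rightarrow> real) \<Rightarrow> nat \<Rightarrow> (nat \<Rightarrow> real) \<Rightarrow> nat \<Rightarrow> real" where
  "rfee c n b i = c 0 + (\<Sum>j\<in>{1..<i}. c j * b j) + (\<Sum>j\<in>{i..<n}. c j * b (Suc j))"

definition tfrm_payment :: "(nat \<Rightarrow> real) \<Rightarrow> nat \<Rightarrow> nat \<Rightarrow> (nat \<Rightarrow> real) \<Rightarrow> nat \<Rightarrow> real" where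
  "tfrm_payment c n k b i = (if i \<le> k then b (k + 1) - rfee c n b i else - rfee c n b i)"

definition tfrm_utility ::
  "(nat \<Rightarrow> real) \<Rightarrow> nat \<Rightarrow> nat \<Rightarrow> (nat \<Rightarrow> real) \<Rightarrow> (nat \<Rightarrow> real) \<Rightarrow> nat \<Rightarrow> real" where
  "tfrm_utility c n k \<theta> b i = (if i \<le> k then \<theta> i else 0) - tfrm_payment c n k b i"

definition IR_u :: "(nat \<Rightarrow> real) \<Rightarrow> nat \<Rightarrow> nat \<Rightarrow> bool" where
  "IR_u c n k \<longleftrightarrow>
     (\<forall>b. ordered_bids n b \<longrightarrow> (\<forall>i\<in>{1..n}. 0 \<le> tfrm_utility c n k b b i))"

end

theory Submission
  imports Defs
begin

lemma rfee_nonneg: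
  fixes n :: nat and c :: "nat \<Rightarrow> real"
  assumes H: "\<forall>b. ordered_bids n b \<longrightarrow> 0 \<le> rfee c n b n"
    and ob: "ordered_bids n b" and i: "1 \<le> i" "i \<le> n"
  shows "0 \<le> rfee c n b i"
proof -
  define b' where "b' j = (if j < i then b j else if j < n then b (Suc j) else 0)" for j
  have mono: "\<And>x y. 1 \<le> x \<Longrightarrow> x \<le> y \<Longrightarrow> y \<le> n \<Longrightarrow> b y \<le> b x"
    and nn: "\<And>x. 1 \<le> x \<Longrightarrow> x \<le> n \<Longrightarrow> 0 \<le> b x"
    using ob unfolding ordered_bids_def by auto
  have "ordered_bids n b'"
    unfolding ordered_bids_def
  proof (intro conjI allI impI ballI)
    fix x y assume xy: "1 \<le> x" "x \<le> y" "y \<le> n"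
    show "b' y \<le> b' x"
      using xy mono[of x y] mono[of x "Suc y"] mono[of "Suc x" "Suc y"] nn[of x] nn[of "Suc x"]
      unfolding b'_def by auto
  next
    fix x assume "x \<in> {1..n}"
    then show "0 \<le> b' x" using nn[of x] nn[of "Suc x"] unfolding b'_def by auto
  qed
  then have "0 \<le> rfee c n b' n" using H by blast
  also have "rfee c n b' n = c 0 + (\<Sum>j\<in>{1..<n}. c j * b' j)"
    unfolding rfee_def by simp
  also have "(\<Sum>j\<in>{1..<n}. c j * b' j) = (\<Sum>j\<in>{1..<i}. c j * b' j) + (\<Sum>j\<in>{i..<n}. c j * b' j)"
    using i by (simp add: sum.atLeastLessThan_concat)
  also have "(\<Sum>j\<in>{1..<i}. c j * b' j) = (\<Sum>j\<in>{1..<i}. c j * b j)"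
    by (rule sum.cong) (auto simp: b'_def)
  also have "(\<Sum>j\<in>{i..<n}. c j * b' j) = (\<Sum>j\<in>{i..<n}. c j * b (Suc j))"
    by (rule sum.cong) (auto simp: b'_def)
  finally show ?thesis unfolding rfee_def by simp
qed

theorem claim1:
  fixes n k :: nat and c :: "nat \<Rightarrow> real"
  assumes "1 \<le> k" and "k + 2 \<le> n"
    and "\<forall>b. ordered_bids n b \<longrightarrow> 0 \<le> rfee c n b n"
  shows "IR_u c n k"
  unfolding IR_u_def
proof (intro allI impI ballI)
  fix b i assume ob: "ordered_bids n b" and i: "i \<in> {1..n}"
  have r: "0 \<le> rfee c n b i" using rfee_nonneg[OF assms(3) ob] i by auto
  have "i \<le> k \<Longrightarrow> b (k+1) \<le> b i" using ob i assms unfolding ordered_bids_def by auto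
  then show "0 \<le> tfrm_utility c n k b b i"
    using r unfolding tfrm_utility_def tfrm_payment_def by auto
qed

end
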